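(* Let $G$ be a simple graph with edge ideal $I(G)\subseteq R=\Bbbk[x_1,\ldots,x_N]$. Let $e_1,\ldots,e_s$ be distinct edges of $G$, let $a_1,\ldots,a_s>0$ be integers, and set $t-1=a_1+\cdots+a_s$ and $x^{\mathbf e}=e_1^{a_1}\cdots e_s^{a_s}$, where each edge $e_i=\{p,q\}$ is identified with the monomial $x_px_q$. Assume that $I(G)^t:x^{\mathbf e}$ is a squarefree monomial ideal. Then $$I(G)^t:x^{\mathbf e}=I(G)^{s+1}:(e_1\cdots e_s)=\left(I(G)^2:e_1\right)^s:(e_2\cdots e_s).$$
   Context: The edge ideal of a simple graph $G$ on $[N]$ is $I(G)=(x_ix_j\mid\{i,j\}\in E(G))$. *)

theory Defs
  imports Main "HOL-Library.Poly_Mapping"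
begin

text \<open>Polynomial ring k[x_v | v in 'v] over a field, 'v a finite type of N = CARD('v) variables:
  polynomials are finitely supported maps from exponent vectors ('v =>0 nat) to coefficients.\<close>
type_synonym ('v, 'k) mpoly = "('v \<Rightarrow>\<^sub>0 nat) \<Rightarrow>\<^sub>0 'k"

definition ideal_gen :: "'a::comm_ring_1 set \<Rightarrow> 'a set" where
  "ideal_gen S = {x. \<exists>F r. finite F \<and> F \<subseteq> S \<and> x = (\<Sum>g\<in>F. r g * g)}"

definition ideal_pow :: "'a::comm_ring_1 set \<Rightarrow> nat \<Rightarrow> 'a set" where
  "ideal_pow I n = ideal_gen {prod_list xs | xs. length xs = n \<and> set xs \<subseteq> I}"

definition ideal_colon :: "'a::comm_ring_1 set \<Rightarrow> 'a \<Rightarrow> 'a set" where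
  "ideal_colon I f = {g. g * f \<in> I}"

definition sqfree_monomial :: "'v set \<Rightarrow> ('v, 'k::comm_ring_1) mpoly" where
  "sqfree_monomial A = Poly_Mapping.single (\<Sum>v\<in>A. Poly_Mapping.single v 1) 1"

abbreviation edge_monomial :: "'v set \<Rightarrow> ('v, 'k::comm_ring_1) mpoly" where
  "edge_monomial e \<equiv> sqfree_monomial e"

definition simple_graph :: "'v set set \<Rightarrow> bool" where
  "simple_graph E \<longleftrightarrow> (\<forall>e\<in>E. card e = 2)"

definition edge_ideal :: "'v set set \<Rightarrow> ('v, 'k::comm_ring_1) mpoly set" where
  "edge_ideal E = ideal_gen (edge_monomial ` E)"

definition squarefree_monomial_ideal :: "('v, 'k::comm_ring_1) mpoly set \<Rightarrow> bool" where
  "squarefree_monomial_ideal I \<longleftrightarrow> (\<exists>S. S \<subseteq> range sqfree_monomial \<and> I = ideal_gen S)"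

end

theory Submission
  imports Defs "HOL-Library.Multiset"
begin

definition mon :: "('v \<Rightarrow>\<^sub>0 nat) \<Rightarrow> ('v, 'k::comm_ring_1) mpoly" where
  "mon b = Poly_Mapping.single b 1"

definition le :: "('v \<Rightarrow>\<^sub>0 nat) \<Rightarrow> ('v \<Rightarrow>\<^sub>0 nat) \<Rightarrow> bool" where
  "le a b \<longleftrightarrow> (\<forall>v. Poly_Mapping.lookup a v \<le> Poly_Mapping.lookup b v)"

definition mideal :: "('v \<Rightarrow>\<^sub>0 nat) set \<Rightarrow> ('v, 'k::comm_ring_1) mpoly set" where
  "mideal S = {g. \<forall>a\<in>Poly_Mapping.keys g. \<exists>b\<in>S. le b a}"

lemma le_refl[simp, intro]: "le a a" by (simp add: le_def)
lemma le_trans: "le a b \<Longrightarrow> le b c \<Longrightarrow> le a c"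
  unfolding le_def using order_trans by blast
lemma le_add_right[simp]: "le a (a + b)" by (simp add: le_def lookup_add)
lemma le_add_left[simp]: "le a (b + a)" by (simp add: le_def lookup_add)
lemma le_add_mono: "le a b \<Longrightarrow> le c d \<Longrightarrow> le (a + c) (b + d)"
  by (simp add: le_def lookup_add add_mono)
lemma le_diff_add: "le b a \<Longrightarrow> (a - b) + b = a"
  by (rule poly_mapping_eqI) (simp add: le_def lookup_add lookup_minus)

lemma ideal_gen_0: "0 \<in> ideal_gen S"
  unfolding ideal_gen_def by (rule CollectI, rule exI[of _ "{}"]) auto

lemma ideal_gen_base: "g \<in> S \<Longrightarrow> g \<in> ideal_gen S"
  unfolding ideal_gen_def
  by (rule CollectI, rule exI[of _ "{g}"], rule exI[of _ "\<lambda>_. 1"]) auto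

lemma ideal_gen_add:
  assumes "x \<in> ideal_gen S" "y \<in> ideal_gen S" shows "x + y \<in> ideal_gen S"
proof -
  obtain F1 r1 where 1: "finite F1" "F1 \<subseteq> S" "x = (\<Sum>g\<in>F1. r1 g * g)"
    using assms(1) unfolding ideal_gen_def by blast
  obtain F2 r2 where 2: "finite F2" "F2 \<subseteq> S" "y = (\<Sum>g\<in>F2. r2 g * g)"
    using assms(2) unfolding ideal_gen_def by blast
  define r where "r g = (if g \<in> F1 then r1 g else 0) + (if g \<in> F2 then r2 g else 0)" for g
  have a: "(\<Sum>g\<in>F1\<union>F2. (if g \<in> F1 then r1 g else 0) * g) = (\<Sum>g\<in>F1. r1 g * g)"
    by (rule sum.mono_neutral_cong_right) (use 1 2 in auto)
  have b: "(\<Sum>g\<in>F1\<union>F2. (if g \<in> F2 then r2 g else 0) * g) = (\<Sum>g\<in>F2. r2 g * g)"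
    by (rule sum.mono_neutral_cong_right) (use 1 2 in auto)
  have "x + y = (\<Sum>g\<in>F1\<union>F2. r g * g)"
    unfolding r_def distrib_right sum.distrib a b 1 2 ..
  then show ?thesis unfolding ideal_gen_def using 1 2 by blast
qed

lemma ideal_gen_mult: "x \<in> ideal_gen S \<Longrightarrow> c * x \<in> ideal_gen S"
proof -
  assume "x \<in> ideal_gen S"
  then obtain F r where 1: "finite F" "F \<subseteq> S" "x = (\<Sum>g\<in>F. r g * g)"
    unfolding ideal_gen_def by blast
  have "c * x = (\<Sum>g\<in>F. (c * r g) * g)" unfolding 1(3) sum_distrib_left by (simp add: mult.assoc)
  then show ?thesis unfolding ideal_gen_def using 1(1,2)
    by (intro CollectI exI[of _ F] exI[of _ "\<lambda>g. c * r g"]) auto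
qed

lemma ideal_gen_sum: "(\<And>i. i \<in> A \<Longrightarrow> f i \<in> ideal_gen S) \<Longrightarrow> sum f A \<in> ideal_gen S"
  by (induction A rule: infinite_finite_induct) (auto intro: ideal_gen_0 ideal_gen_add)

lemma ideal_gen_sub: "T \<subseteq> ideal_gen S \<Longrightarrow> ideal_gen T \<subseteq> ideal_gen S"
proof
  fix x assume T: "T \<subseteq> ideal_gen S" and "x \<in> ideal_gen T"
  then obtain F r where 1: "finite F" "F \<subseteq> T" "x = (\<Sum>g\<in>F. r g * g)"
    unfolding ideal_gen_def by blast
  show "x \<in> ideal_gen S" unfolding 1(3)
    by (rule ideal_gen_sum) (use 1 T in \<open>auto intro: ideal_gen_mult\<close>)
qed

lemma poly_as_sum: "g = (\<Sum>a\<in>Poly_Mapping.keys g. Poly_Mapping.single a (Poly_Mapping.lookup g a))"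
  by (rule poly_mapping_eqI) (auto simp: lookup_sum lookup_single when_def in_keys_iff)

lemma mon_mult: "mon a * mon b = mon (a + b)"
  by (simp add: mon_def mult_single)

lemma lookup_mult_mon: "Poly_Mapping.lookup (g * mon b) (a + b) = Poly_Mapping.lookup g a"
proof -
  have "g * mon b = (\<Sum>c\<in>Poly_Mapping.keys g. Poly_Mapping.single c (Poly_Mapping.lookup g c)) * mon b"
    using poly_as_sum[of g] by (rule arg_cong[where f="\<lambda>z. z * mon b"])
  also have "\<dots> = (\<Sum>c\<in>Poly_Mapping.keys g. Poly_Mapping.single (c + b) (Poly_Mapping.lookup g c))"
    by (simp add: sum_distrib_right mon_def mult_single)
  finally show ?thesis
    by (auto simp: lookup_sum lookup_single when_def in_keys_iff)
qed

lemma keys_mult_mon: "Poly_Mapping.keys (g * mon b) = (\<lambda>a. a + b) ` Poly_Mapping.keys g"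
proof
  show "Poly_Mapping.keys (g * mon b) \<subseteq> (\<lambda>a. a + b) ` Poly_Mapping.keys g"
    using keys_mult[of g "mon b"] by (auto simp: mon_def)
  show "(\<lambda>a. a + b) ` Poly_Mapping.keys g \<subseteq> Poly_Mapping.keys (g * mon b)"
  proof
    fix x assume "x \<in> (\<lambda>a. a + b) ` Poly_Mapping.keys g"
    then obtain a where "a \<in> Poly_Mapping.keys g" "x = a + b" by auto
    then show "x \<in> Poly_Mapping.keys (g * mon b)" by (simp add: in_keys_iff lookup_mult_mon)
  qed
qed

lemma ideal_gen_mon1:
  fixes x :: "('v, 'k::comm_ring_1) mpoly"
  assumes "x \<in> ideal_gen (mon ` S)" shows "x \<in> mideal S"
proof -
  obtain F r where 1: "finite F" "F \<subseteq> mon ` S" "x = (\<Sum>g\<in>F. r g * g)"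
    using assms unfolding ideal_gen_def by blast
  show "x \<in> mideal S" unfolding mideal_def
  proof (intro CollectI ballI)
    fix a assume "a \<in> Poly_Mapping.keys x"
    then obtain g where g: "g \<in> F" "a \<in> Poly_Mapping.keys (r g * g)"
      using keys_sum[of "\<lambda>g. r g * g" F] 1(3) by auto
    then obtain b where b: "b \<in> S" "g = mon b" using 1(2) by auto
    then have "a \<in> (\<lambda>c. c + b) ` Poly_Mapping.keys (r g)" using g keys_mult_mon by metis
    then obtain c where "a = c + b" by auto
    then show "\<exists>b\<in>S. le b a" using b(1) by (intro bexI[of _ b]) auto
  qed
qed

lemma ideal_gen_mon2:
  fixes x :: "('v, 'k::comm_ring_1) mpoly"
  assumes x: "x \<in> mideal S" shows "x \<in> ideal_gen (mon ` S)"
proof -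
  have "(\<Sum>a\<in>Poly_Mapping.keys x. Poly_Mapping.single a (Poly_Mapping.lookup x a)) \<in> ideal_gen (mon ` S)"
  proof (rule ideal_gen_sum)
    fix a assume a: "a \<in> Poly_Mapping.keys x"
    then obtain b where b: "b \<in> S" "le b a" using x unfolding mideal_def by blast
    have "Poly_Mapping.single a (Poly_Mapping.lookup x a) = Poly_Mapping.single (a - b) (Poly_Mapping.lookup x a) * mon b"
      by (simp add: mon_def mult_single le_diff_add[OF b(2)])
    moreover have "mon b \<in> ideal_gen (mon ` S)" by (rule ideal_gen_base) (use b in auto)
    ultimately show "Poly_Mapping.single a (Poly_Mapping.lookup x a) \<in> ideal_gen (mon ` S)"
      using ideal_gen_mult by metis
  qed
  then show ?thesis by (simp only: poly_as_sum[of x, symmetric])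
qed

lemma ideal_gen_mon: "ideal_gen (mon ` S) = (mideal S :: ('v, 'k::comm_ring_1) mpoly set)"
  using ideal_gen_mon1 ideal_gen_mon2 by blast

definition sumsets :: "('v \<Rightarrow>\<^sub>0 nat) set \<Rightarrow> nat \<Rightarrow> ('v \<Rightarrow>\<^sub>0 nat) set" where
  "sumsets S n = {sum_list bs | bs. length bs = n \<and> set bs \<subseteq> S}"

lemma mideal_mult:
  fixes f g :: "('v, 'k::comm_ring_1) mpoly"
  assumes "f \<in> mideal A" "g \<in> mideal B"
  shows "f * g \<in> mideal {a + b | a b. a \<in> A \<and> b \<in> B}"
  unfolding mideal_def
proof (intro CollectI ballI)
  fix x assume "x \<in> Poly_Mapping.keys (f * g)"
  then obtain a b where ab: "a \<in> Poly_Mapping.keys f" "b \<in> Poly_Mapping.keys g" "x = a + b"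
    using keys_mult by blast
  obtain a' where a': "a' \<in> A" "le a' a" using assms(1) ab(1) unfolding mideal_def by blast
  obtain b' where b': "b' \<in> B" "le b' b" using assms(2) ab(2) unfolding mideal_def by blast
  show "\<exists>y\<in>{a + b |a b. a \<in> A \<and> b \<in> B}. le y x"
    using a' b' ab(3) le_add_mono by blast
qed

lemma mideal_mono:
  assumes "\<And>a. a \<in> A \<Longrightarrow> \<exists>b\<in>B. le b a"
  shows "mideal A \<subseteq> mideal B"
  using assms le_trans unfolding mideal_def by blast

lemma mideal_add:
  assumes "f \<in> mideal A" "g \<in> mideal A" shows "f + g \<in> mideal A"
  using assms keys_add[of f g] unfolding mideal_def by blast

lemma mideal_zero: "0 \<in> mideal A" unfolding mideal_def by simp

lemma mideal_cmult:
  fixes f g :: "('v, 'k::comm_ring_1) mpoly"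
  assumes "g \<in> mideal A" shows "f * g \<in> mideal A"
proof -
  have "f \<in> mideal {0}" unfolding mideal_def by (auto simp: le_def)
  then have "f * g \<in> mideal {a + b | a b. a \<in> {0} \<and> b \<in> A}" using mideal_mult assms by blast
  also have "\<dots> \<subseteq> mideal A" by (rule mideal_mono) auto
  finally show ?thesis .
qed

lemma mideal_sum: "(\<And>i. i \<in> I \<Longrightarrow> f i \<in> mideal A) \<Longrightarrow> sum f I \<in> mideal A"
  by (induction I rule: infinite_finite_induct) (auto intro: mideal_zero mideal_add)

lemma ideal_gen_in_mideal:
  fixes T :: "('v, 'k::comm_ring_1) mpoly set"
  assumes "T \<subseteq> mideal A" shows "ideal_gen T \<subseteq> mideal A"
proof
  fix x assume "x \<in> ideal_gen T"
  then obtain F r where 1: "finite F" "F \<subseteq> T" "x = (\<Sum>g\<in>F. r g * g)"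
    unfolding ideal_gen_def by blast
  show "x \<in> mideal A" unfolding 1(3)
    by (rule mideal_sum) (use 1 assms in \<open>auto intro: mideal_cmult\<close>)
qed

lemma mon_sum_list: "(mon (sum_list bs) :: ('v, 'k::comm_ring_1) mpoly) = prod_list (map mon bs)"
proof (induction bs)
  case Nil show ?case by (simp add: mon_def)
next
  case (Cons a bs)
  have "(mon (sum_list (a # bs)) :: ('v, 'k) mpoly) = mon a * mon (sum_list bs)" by (simp add: mon_mult)
  then show ?case using Cons by simp
qed

lemma mon_in_mideal: "b \<in> S \<Longrightarrow> (mon b :: ('v, 'k::comm_ring_1) mpoly) \<in> mideal S"
  unfolding mideal_def mon_def using le_refl by auto

lemma prod_list_mideal:
  fixes xs :: "('v, 'k::comm_ring_1) mpoly list"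
  assumes "set xs \<subseteq> mideal S"
  shows "prod_list xs \<in> mideal (sumsets S (length xs))"
  using assms
proof (induction xs)
  case Nil
  have "(1 :: ('v, 'k) mpoly) = mon 0" by (simp add: mon_def)
  moreover have "0 \<in> sumsets S 0" unfolding sumsets_def by auto
  ultimately show ?case using mon_in_mideal by (metis list.size(3) prod_list.Nil)
next
  case (Cons x xs)
  then have "x * prod_list xs \<in> mideal {a + b | a b. a \<in> S \<and> b \<in> sumsets S (length xs)}"
    by (intro mideal_mult) auto
  also have "\<dots> \<subseteq> mideal (sumsets S (length (x # xs)))"
  proof (rule mideal_mono)
    fix c assume "c \<in> {a + b | a b. a \<in> S \<and> b \<in> sumsets S (length xs)}"
    then obtain a bs where "c = a + sum_list bs" "a \<in> S" "length bs = length xs" "set bs \<subseteq> S"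
      unfolding sumsets_def by blast
    then have "c \<in> sumsets S (length (x # xs))" unfolding sumsets_def
      by (intro CollectI exI[of _ "a # bs"]) auto
    then show "\<exists>b\<in>sumsets S (length (x # xs)). le b c" using le_refl by blast
  qed
  finally show ?case by simp
qed

lemma ideal_pow_mideal:
  "ideal_pow (mideal S :: ('v, 'k::comm_ring_1) mpoly set) n = mideal (sumsets S n)"
proof
  show "ideal_pow (mideal S :: ('v, 'k) mpoly set) n \<subseteq> mideal (sumsets S n)"
    unfolding ideal_pow_def
  proof (rule ideal_gen_in_mideal, rule subsetI)
    fix y :: "('v, 'k) mpoly"
    assume "y \<in> {prod_list xs |xs. length xs = n \<and> set xs \<subseteq> mideal S}"
    then obtain xs where "y = prod_list xs" "length xs = n" "set xs \<subseteq> (mideal S :: ('v, 'k) mpoly set)" by blast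
    then show "y \<in> mideal (sumsets S n)" using prod_list_mideal[of xs S] by simp
  qed
  have "mon ` sumsets S n \<subseteq> ideal_gen {prod_list xs |xs. length xs = n \<and> set xs \<subseteq> (mideal S :: ('v, 'k) mpoly set)}"
  proof
    fix y :: "('v, 'k) mpoly" assume "y \<in> mon ` sumsets S n"
    then obtain bs where bs: "y = mon (sum_list bs)" "length bs = n" "set bs \<subseteq> S"
      unfolding sumsets_def by blast
    then have "y = prod_list (map mon bs)" by (simp only: mon_sum_list)
    moreover have "set (map mon bs) \<subseteq> (mideal S :: ('v, 'k) mpoly set)"
      using bs(3) mon_in_mideal by auto
    ultimately have "y \<in> {prod_list xs |xs. length xs = n \<and> set xs \<subseteq> (mideal S :: ('v, 'k) mpoly set)}"
      using bs(2) by (intro CollectI exI[of _ "map mon bs"]) simp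
    then show "y \<in> ideal_gen {prod_list xs |xs. length xs = n \<and> set xs \<subseteq> (mideal S :: ('v, 'k) mpoly set)}"
      by (rule ideal_gen_base)
  qed
  then have "ideal_gen (mon ` sumsets S n) \<subseteq> ideal_pow (mideal S :: ('v, 'k) mpoly set) n"
    unfolding ideal_pow_def by (rule ideal_gen_sub)
  then show "mideal (sumsets S n) \<subseteq> ideal_pow (mideal S :: ('v, 'k) mpoly set) n"
    by (simp only: ideal_gen_mon)
qed

lemma colon_mideal:
  "ideal_colon (mideal S :: ('v, 'k::comm_ring_1) mpoly set) (mon c) = mideal {a. \<exists>b\<in>S. le b (a + c)}"
proof -
  have *: "\<And>b a c a'. le b (a + c) \<Longrightarrow> le a a' \<Longrightarrow> le b (a' + c)"
    by (meson le_add_mono le_refl le_trans)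
  show ?thesis
  proof (intro set_eqI iffI)
    fix g :: "('v, 'k) mpoly"
    assume "g \<in> ideal_colon (mideal S) (mon c)"
    then have "\<forall>a\<in>Poly_Mapping.keys (g * mon c). \<exists>b\<in>S. le b a"
      unfolding ideal_colon_def mideal_def by auto
    then show "g \<in> mideal {a. \<exists>b\<in>S. le b (a + c)}"
      unfolding mideal_def keys_mult_mon using le_refl by blast
  next
    fix g :: "('v, 'k) mpoly"
    assume "g \<in> mideal {a. \<exists>b\<in>S. le b (a + c)}"
    then have "\<forall>a\<in>Poly_Mapping.keys g. \<exists>b\<in>S. le b (a + c)"
      unfolding mideal_def using * by blast
    then show "g \<in> ideal_colon (mideal S) (mon c)"
      unfolding ideal_colon_def mideal_def by (auto simp: keys_mult_mon)
  qed
qed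

lemma mon_mem_mideal: "((mon a :: ('v, 'k::comm_ring_1) mpoly) \<in> mideal S) \<longleftrightarrow> (\<exists>b\<in>S. le b a)"
  unfolding mideal_def mon_def by auto

definition ev :: "'v set \<Rightarrow> ('v \<Rightarrow>\<^sub>0 nat)" where
  "ev A = (\<Sum>v\<in>A. Poly_Mapping.single v 1)"

abbreviation xv :: "'v \<Rightarrow> ('v \<Rightarrow>\<^sub>0 nat)" where
  "xv v \<equiv> Poly_Mapping.single v 1"

definition SB :: "'v set multiset \<Rightarrow> ('v \<Rightarrow>\<^sub>0 nat)" where
  "SB B = sum_mset (image_mset ev B)"

lemma SB_empty[simp]: "SB {#} = 0" by (simp add: SB_def)
lemma SB_add_mset[simp]: "SB (add_mset f B) = ev f + SB B" by (simp add: SB_def)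
lemma SB_union[simp]: "SB (A + B) = SB A + SB B" by (simp add: SB_def)

lemma lookup_ev: "finite A \<Longrightarrow> Poly_Mapping.lookup (ev A) w = (if w \<in> A then 1 else 0)"
  by (simp add: ev_def lookup_sum lookup_single when_def)

lemma lookup_xv: "Poly_Mapping.lookup (xv v) w = (if w = v then 1 else 0)"
  by (simp add: lookup_single when_def)

lemma ev_pair: "u \<noteq> v \<Longrightarrow> ev {u, v} = xv u + xv v"
  by (simp add: ev_def)

inductive trail :: "'v set set \<Rightarrow> 'v set multiset \<Rightarrow> 'v \<Rightarrow> 'v \<Rightarrow> bool" for E where
  base: "{u, v} \<in> E \<Longrightarrow> u \<noteq> v \<Longrightarrow> trail E {#} u v"
| step: "{u, a} \<in> E \<Longrightarrow> u \<noteq> a \<Longrightarrow> a \<noteq> b \<Longrightarrow> trail E B b v \<Longrightarrow> trail E (add_mset {a, b} B) u v"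

lemma trail_mem:
  assumes "trail E B u v"
  shows "\<exists>F. set_mset F \<subseteq> E \<and> size F = size B + 1 \<and> SB F = xv u + xv v + SB B"
  using assms
proof (induction rule: trail.induct)
  case (base u v)
  then show ?case by (intro exI[of _ "{#{u, v}#}"]) (simp add: ev_pair)
next
  case (step u a b B v)
  then obtain F where F: "set_mset F \<subseteq> E" "size F = size B + 1" "SB F = xv b + xv v + SB B" by blast
  show ?case
    using step F by (intro exI[of _ "add_mset {u, a} F"]) (simp add: ev_pair algebra_simps)
qed

lemma trail_concat:
  assumes "trail E B1 u a" "a \<noteq> b" "trail E B2 b v"
  shows "trail E (B1 + add_mset {a, b} B2) u v"
  using assms
proof (induction rule: trail.induct)
  case (base u a)
  then show ?case using trail.step by fastforce
next
  case (step u a' b' B a)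
  then have "trail E (B + add_mset {a, b} B2) b' v" by blast
  then have "trail E (add_mset {a', b'} (B + add_mset {a, b} B2)) u v"
    using step by (intro trail.step) auto
  then show ?case by (simp add: add_mset_commute)
qed

lemma trail_sym:
  assumes "trail E B u v" shows "trail E B v u"
  using assms
proof (induction rule: trail.induct)
  case (base u v)
  then show ?case by (intro trail.base) (auto simp: insert_commute)
next
  case (step u a b B v)
  have "trail E {#} a u" using step by (intro trail.base) (auto simp: insert_commute)
  then have "trail E (B + add_mset {b, a} {#}) v u"
    using step by (intro trail_concat) auto
  then show ?case by (simp add: insert_commute)
qed

lemma trail_split:
  assumes "trail E B u v" "e \<in># B"
  shows "\<exists>a b B1 B2. e = {a, b} \<and> a \<noteq> b \<and> B = B1 + add_mset e B2 \<and> trail E B1 u a \<and> trail E B2 b v"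
  using assms
proof (induction rule: trail.induct)
  case (base u v)
  then show ?case by simp
next
  case (step u a' b' B v)
  show ?case
  proof (cases "e = {a', b'}")
    case True
    have t0: "trail E {#} u a'" using step by (intro trail.base) auto
    have "add_mset {a', b'} B = {#} + add_mset e B" using True by simp
    then show ?thesis using True t0 step(3,4) by blast
  next
    case False
    then have "e \<in># B" using step by auto
    then obtain a b B1 B2 where ab: "e = {a, b}" "a \<noteq> b" "B = B1 + add_mset e B2" "trail E B1 b' a" "trail E B2 b v"
      using step by blast
    have t1: "trail E (add_mset {a', b'} B1) u a" using step(1,2,3) ab(4) by (rule trail.step)
    have "add_mset {a', b'} B = add_mset {a', b'} B1 + add_mset e B2" using ab(3) by simp
    then show ?thesis using ab(1,2,5) t1 by blast
  qed
qed

definition distinct_ms :: "'a multiset \<Rightarrow> bool" where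
  "distinct_ms B \<longleftrightarrow> (\<forall>x. count B x \<le> 1)"

definition Rred :: "'v set set \<Rightarrow> 'v set multiset \<Rightarrow> 'v \<Rightarrow> 'v \<Rightarrow> bool" where
  "Rred E B u v \<longleftrightarrow> (\<exists>B'. B' \<subseteq># B \<and> distinct_ms B' \<and> trail E B' u v) \<or> (\<exists>y C. C \<subseteq># B \<and> distinct_ms C \<and> trail E C y y)"

lemma Rred_mono: "Rred E B' u v \<Longrightarrow> B' \<subseteq># B \<Longrightarrow> Rred E B u v"
  unfolding Rred_def by (meson subset_mset.order_trans)

lemma Rred_sq: "Rred E B' y y \<Longrightarrow> B' \<subseteq># B \<Longrightarrow> Rred E B u v"
  unfolding Rred_def by (meson subset_mset.order_trans)

lemma trail_reduce:
  assumes "trail E B u v"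
  shows "Rred E B u v"
  using assms
proof (induction "size B" arbitrary: B u v rule: less_induct)
  case less
  show ?case
  proof (cases "distinct_ms B")
    case True
    show ?thesis unfolding Rred_def using True less.prems by (intro disjI1 exI[of _ B]) simp
  next
    case False
    then obtain e where "\<not> count B e \<le> 1" unfolding distinct_ms_def by blast
    then have e2: "count B e \<ge> 2" by simp
    then have eB: "e \<in># B" using not_in_iff[of e B] by auto
    obtain a b B1 B2 where ab: "e = {a, b}" "a \<noteq> b" "B = B1 + add_mset e B2" "trail E B1 u a" "trail E B2 b v"
      using trail_split[OF less.prems eB] by blast
    have "count B1 e + count B2 e \<ge> 1" using e2 ab(3) by simp
    then have "e \<in># B1 \<or> e \<in># B2" using not_in_iff[of e B1] not_in_iff[of e B2] by auto
    then show ?thesis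
    proof
      assume "e \<in># B1"
      then obtain a' b' C1 C2 where cd: "e = {a', b'}" "a' \<noteq> b'" "B1 = C1 + add_mset e C2" "trail E C1 u a'" "trail E C2 b' a"
        using trail_split[OF ab(4) \<open>e \<in># B1\<close>] by blast
      have "(a' = a \<and> b' = b) \<or> (a' = b \<and> b' = a)" using cd(1,2) ab(1,2) by (auto simp: doubleton_eq_iff)
      then show ?thesis
      proof
        assume "a' = a \<and> b' = b"
        then have t: "trail E (C1 + add_mset {a, b} B2) u v" using cd ab by (intro trail_concat) auto
        have sub: "C1 + add_mset {a, b} B2 \<subseteq># B" unfolding subseteq_mset_def using ab cd by auto
        have "size (C1 + add_mset {a, b} B2) < size B" using ab cd by simp
        then have "Rred E (C1 + add_mset {a, b} B2) u v" using less.hyps t by blast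
        then show ?thesis using sub by (rule Rred_mono)
      next
        assume "a' = b \<and> b' = a"
        then have t: "trail E C2 a a" using cd by simp
        have sub: "C2 \<subseteq># B" unfolding subseteq_mset_def using ab cd by auto
        have "size C2 < size B" using ab cd by simp
        then have "Rred E C2 a a" using less.hyps t by blast
        then show ?thesis using sub by (rule Rred_sq)
      qed
    next
      assume "e \<in># B2"
      then obtain a' b' C1 C2 where cd: "e = {a', b'}" "a' \<noteq> b'" "B2 = C1 + add_mset e C2" "trail E C1 b a'" "trail E C2 b' v"
        using trail_split[OF ab(5) \<open>e \<in># B2\<close>] by blast
      have "(a' = a \<and> b' = b) \<or> (a' = b \<and> b' = a)" using cd(1,2) ab(1,2) by (auto simp: doubleton_eq_iff)
      then show ?thesis
      proof
        assume "a' = a \<and> b' = b"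
        then have t: "trail E (B1 + add_mset {a, b} C2) u v" using cd ab by (intro trail_concat) auto
        have sub: "B1 + add_mset {a, b} C2 \<subseteq># B" unfolding subseteq_mset_def using ab cd by auto
        have "size (B1 + add_mset {a, b} C2) < size B" using ab cd by simp
        then have "Rred E (B1 + add_mset {a, b} C2) u v" using less.hyps t by blast
        then show ?thesis using sub by (rule Rred_mono)
      next
        assume "a' = b \<and> b' = a"
        then have t: "trail E C1 b b" using cd by simp
        have sub: "C1 \<subseteq># B" unfolding subseteq_mset_def using ab cd by auto
        have "size C1 < size B" using ab cd by simp
        then have "Rred E C1 b b" using less.hyps t by blast
        then show ?thesis using sub by (rule Rred_sq)
      qed
    qed
  qed
qed

definition deg :: "('v::finite \<Rightarrow>\<^sub>0 nat) \<Rightarrow> nat" where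
  "deg a = (\<Sum>v\<in>UNIV. Poly_Mapping.lookup a v)"

lemma deg_add[simp]: "deg (a + b) = deg a + deg b"
  by (simp add: deg_def lookup_add sum.distrib)

lemma deg_le: "le a b \<Longrightarrow> deg a \<le> deg b"
  unfolding deg_def le_def by (simp add: sum_mono)

lemma deg_ev: "deg (ev (A :: 'v::finite set)) = card A"
  by (simp add: deg_def lookup_ev sum.If_cases)

lemma deg_xv[simp]: "deg (xv (v :: 'v::finite)) = 1"
  unfolding deg_def lookup_xv by simp

lemma deg_zero[simp]: "deg 0 = 0" by (simp add: deg_def)

lemma deg_SB: "(\<forall>f\<in>#F. card f = 2) \<Longrightarrow> deg (SB (F :: 'v::finite set multiset)) = 2 * size F"
  by (induction F) (auto simp: deg_ev)

lemma lookup_SB_pos: "Poly_Mapping.lookup (SB F) v > 0 \<Longrightarrow> \<exists>f\<in>#F. (v :: 'v::finite) \<in> f"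
proof (induction F)
  case empty then show ?case by simp
next
  case (add f F)
  show ?case
  proof (cases "v \<in> f")
    case True then show ?thesis by simp
  next
    case False
    then have "Poly_Mapping.lookup (SB F) v > 0" using add.prems by (simp add: lookup_add lookup_ev)
    then show ?thesis using add.IH by auto
  qed
qed

lemma lookup_SB_mem: "f \<in># F \<Longrightarrow> (v :: 'v::finite) \<in> f \<Longrightarrow> Poly_Mapping.lookup (SB F) v \<ge> 1"
  by (induction F) (auto simp: lookup_add lookup_ev)

lemma card2_other: "card f = 2 \<Longrightarrow> u \<in> f \<Longrightarrow> \<exists>p. f = {u, p} \<and> u \<noteq> p"
  by (auto simp: card_2_iff)

lemma trail_exists:
  fixes W F :: "'v::finite set multiset"
  assumes "\<forall>f\<in>E. card f = 2" "set_mset F \<subseteq> E" "\<forall>w\<in>#W. card w = 2"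
    "size F = size W + 1" "le (SB F) (\<alpha> + SB W)"
  shows "\<exists>u v B. B \<subseteq># W \<and> trail E B u v \<and> le (xv u + xv v) \<alpha>"
  using assms(2-)
proof (induction "size W" arbitrary: W F \<alpha> rule: less_induct)
  case less
  have cF: "\<forall>f\<in>#F. card f = 2" using less.prems(1) assms(1) by auto
  have "\<exists>u. Poly_Mapping.lookup (SB F) u > Poly_Mapping.lookup (SB W) u"
  proof (rule ccontr)
    assume "\<not> ?thesis"
    then have "le (SB F) (SB W)" unfolding le_def by (simp add: not_less)
    then have "deg (SB F) \<le> deg (SB W)" by (rule deg_le)
    then show False using deg_SB[OF cF] deg_SB[OF less.prems(2)] less.prems(3) by simp
  qed
  then obtain u where u: "Poly_Mapping.lookup (SB F) u > Poly_Mapping.lookup (SB W) u" by blast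
  have leF: "\<And>v. Poly_Mapping.lookup (SB F) v \<le> Poly_Mapping.lookup \<alpha> v + Poly_Mapping.lookup (SB W) v"
    using less.prems(4) unfolding le_def by (simp add: lookup_add)
  have au: "Poly_Mapping.lookup \<alpha> u \<ge> 1"
    using u leF[of u] by linarith
  have "Poly_Mapping.lookup (SB F) u > 0" using u by linarith
  then obtain f where f: "f \<in># F" "u \<in> f" using lookup_SB_pos by blast
  have "card f = 2" using cF f(1) by blast
  then obtain p where p: "f = {u, p}" "u \<noteq> p" using card2_other[of f u] f(2) by blast
  have fE: "{u, p} \<in> E" using f p less.prems(1) by auto
  show ?case
  proof (cases "Poly_Mapping.lookup \<alpha> p \<ge> 1")
    case True
    have "trail E {#} u p" using fE p by (intro trail.base)
    moreover have "le (xv u + xv p) \<alpha>"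
      unfolding le_def using au True p(2) by (auto simp: lookup_add lookup_single when_def)
    ultimately show ?thesis by (intro exI[of _ u] exI[of _ p] exI[of _ "{#}"]) simp
  next
    case False
    then have ap: "Poly_Mapping.lookup \<alpha> p = 0" by simp
    have "Poly_Mapping.lookup (SB F) p \<ge> 1" using lookup_SB_mem[OF f(1), of p] p by simp
    then have "Poly_Mapping.lookup (SB W) p > 0"
      using leF[of p] ap by linarith
    then obtain w where w: "w \<in># W" "p \<in> w" using lookup_SB_pos by blast
    have "card w = 2" using less.prems(2) w(1) by blast
    then obtain q where q: "w = {p, q}" "p \<noteq> q" using card2_other[of w p] w(2) by blast
    define W' where "W' = W - {#w#}"
    define F' where "F' = F - {#f#}"
    define \<alpha>' where "\<alpha>' = \<alpha> - xv u + xv q"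
    have W: "W = add_mset w W'" using w W'_def by simp
    have F: "F = add_mset f F'" using f F'_def by simp
    have le1: "le (SB F') (\<alpha>' + SB W')"
      unfolding le_def
    proof
      fix v
      have "Poly_Mapping.lookup (SB F) v \<le> Poly_Mapping.lookup (\<alpha> + SB W) v"
        using less.prems(4) unfolding le_def by blast
      then have "Poly_Mapping.lookup (ev {u, p}) v + Poly_Mapping.lookup (SB F') v
          \<le> Poly_Mapping.lookup \<alpha> v + (Poly_Mapping.lookup (ev {p, q}) v + Poly_Mapping.lookup (SB W') v)"
        using W F p q by (simp add: lookup_add)
      then show "Poly_Mapping.lookup (SB F') v \<le> Poly_Mapping.lookup (\<alpha>' + SB W') v"
        unfolding \<alpha>'_def using au p(2) q(2) by (auto simp: lookup_add lookup_minus lookup_single when_def lookup_ev split: if_splits)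
    qed
    have sW': "size W' < size W" using W by simp
    have "\<exists>u v B. B \<subseteq># W' \<and> trail E B u v \<and> le (xv u + xv v) \<alpha>'"
      by (rule less.hyps[OF sW']) (use less.prems le1 W F in auto)
    then obtain u' v' B' where B': "B' \<subseteq># W'" "trail E B' u' v'" "le (xv u' + xv v') \<alpha>'" by blast
    obtain u'' v'' where uv: "trail E B' u'' v''" "le (xv u'' + xv v'') \<alpha>'" "u'' = q \<or> (u'' \<noteq> q \<and> v'' \<noteq> q)"
    proof (cases "v' = q")
      case True
      then show ?thesis using that[of v' u'] B' trail_sym by (metis add.commute)
    next
      case False
      then show ?thesis using that[of u' v'] B' by blast
    qed
    show ?thesis
    proof (cases "u'' = q")
      case True
      have "trail E (add_mset {p, q} B') u v''"
        using fE p(2) q(2) uv(1) True by (intro trail.step) auto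
      moreover have "add_mset {p, q} B' \<subseteq># W" using B'(1) W q(1) by simp
      moreover have "le (xv u + xv v'') \<alpha>"
        unfolding le_def
      proof
        fix v
        have "Poly_Mapping.lookup (xv q + xv v'') v \<le> Poly_Mapping.lookup \<alpha>' v"
          using uv(2) True unfolding le_def by blast
        then show "Poly_Mapping.lookup (xv u + xv v'') v \<le> Poly_Mapping.lookup \<alpha> v"
          unfolding \<alpha>'_def using au by (auto simp: lookup_add lookup_minus lookup_single when_def split: if_splits)
      qed
      ultimately show ?thesis by blast
    next
      case False
      then have nq: "u'' \<noteq> q" "v'' \<noteq> q" using uv(3) by auto
      have "le (xv u'' + xv v'') \<alpha>"
        unfolding le_def
      proof
        fix v
        have "Poly_Mapping.lookup (xv u'' + xv v'') v \<le> Poly_Mapping.lookup \<alpha>' v"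
          using uv(2) unfolding le_def by blast
        then show "Poly_Mapping.lookup (xv u'' + xv v'') v \<le> Poly_Mapping.lookup \<alpha> v"
          unfolding \<alpha>'_def using nq by (auto simp: lookup_add lookup_minus lookup_single when_def split: if_splits)
      qed
      moreover have "B' \<subseteq># W" using B'(1) W by (simp add: subset_mset.order_trans)
      ultimately show ?thesis using uv(1) by blast
    qed
  qed
qed

definition inM :: "'v set set \<Rightarrow> nat \<Rightarrow> ('v \<Rightarrow>\<^sub>0 nat) \<Rightarrow> bool" where
  "inM E k d \<longleftrightarrow> (\<exists>F. set_mset F \<subseteq> E \<and> size F = k \<and> le (SB F) d)"

lemma map_ev_lists: "set bs \<subseteq> f ` A \<Longrightarrow> \<exists>xs. bs = map f xs \<and> set xs \<subseteq> A"
proof (induction bs)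
  case Nil then show ?case by simp
next
  case (Cons b bs)
  then obtain xs where xs: "bs = map f xs" "set xs \<subseteq> A" by auto
  obtain x where "x \<in> A" "b = f x" using Cons.prems by auto
  then show ?case using xs by (intro exI[of _ "x # xs"]) auto
qed

lemma SB_mset: "SB (mset fs) = sum_list (map ev fs)"
  by (induction fs) auto

lemma sumsets_inM: "(\<exists>g\<in>sumsets (ev ` E) k. le g d) \<longleftrightarrow> inM E k d"
proof
  assume "\<exists>g\<in>sumsets (ev ` E) k. le g d"
  then obtain bs where bs: "length bs = k" "set bs \<subseteq> ev ` E" "le (sum_list bs) d"
    unfolding sumsets_def by blast
  obtain fs where fs: "bs = map ev fs" "set fs \<subseteq> E" using map_ev_lists[OF bs(2)] by blast
  show "inM E k d" unfolding inM_def
    using bs fs by (intro exI[of _ "mset fs"]) (auto simp: SB_mset)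
next
  assume "inM E k d"
  then obtain F where F: "set_mset F \<subseteq> E" "size F = k" "le (SB F) d" unfolding inM_def by blast
  obtain fs where fs: "mset fs = F" using ex_mset by blast
  have "sum_list (map ev fs) \<in> sumsets (ev ` E) k"
    unfolding sumsets_def using F fs by (intro CollectI exI[of _ "map ev fs"]) auto
  moreover have "le (sum_list (map ev fs)) d" using F(3) fs SB_mset by metis
  ultimately show "\<exists>g\<in>sumsets (ev ` E) k. le g d" by blast
qed

lemma inM_mono: "inM E k d \<Longrightarrow> le d d' \<Longrightarrow> inM E k d'"
  unfolding inM_def using le_trans by blast

lemma inM_sum: "inM E a x \<Longrightarrow> inM E b y \<Longrightarrow> inM E (a + b) (x + y)"
proof -
  assume "inM E a x" "inM E b y"
  then obtain F G where "set_mset F \<subseteq> E" "size F = a" "le (SB F) x" "set_mset G \<subseteq> E" "size G = b" "le (SB G) y"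
    unfolding inM_def by blast
  then show ?thesis unfolding inM_def by (intro exI[of _ "F + G"]) (auto intro: le_add_mono)
qed

lemma inM_SB: "set_mset C \<subseteq> E \<Longrightarrow> inM E (size C) (SB C)"
  unfolding inM_def by auto

lemma inM_add: "inM E k d \<Longrightarrow> set_mset C \<subseteq> E \<Longrightarrow> inM E (k + size C) (d + SB C)"
  using inM_sum inM_SB by blast

lemma inM_deg: "\<forall>f\<in>E. card f = 2 \<Longrightarrow> inM E k (d :: 'v::finite \<Rightarrow>\<^sub>0 nat) \<Longrightarrow> 2 * k \<le> deg d"
proof -
  assume E2: "\<forall>f\<in>E. card f = 2" and "inM E k d"
  then obtain F where F: "set_mset F \<subseteq> E" "size F = k" "le (SB F) d" unfolding inM_def by blast
  have "\<forall>f\<in>#F. card f = 2" using E2 F(1) by auto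
  then have "deg (SB F) = 2 * k" using deg_SB F(2) by metis
  then show ?thesis using deg_le[OF F(3)] by simp
qed

lemma distinct_sub: "distinct_ms B \<Longrightarrow> set_mset B \<subseteq> set_mset D \<Longrightarrow> B \<subseteq># D"
  unfolding subseteq_mset_def distinct_ms_def
proof
  fix x assume d: "\<forall>x. count B x \<le> 1" and s: "set_mset B \<subseteq> set_mset D"
  show "count B x \<le> count D x"
  proof (cases "x \<in># B")
    case True
    then have "x \<in># D" using s by auto
    then have "count D x \<ge> 1" by (simp add: Suc_le_eq)
    then show ?thesis using spec[OF d, of x] by linarith
  next
    case False
    then show ?thesis by (simp add: not_in_iff)
  qed
qed

lemma main_comb:
  fixes D W :: "'v::finite set multiset"
  assumes E2: "\<forall>f\<in>E. card f = 2" and DE: "set_mset D \<subseteq> E"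
    and NoSq: "\<And>y C. C \<subseteq># D \<Longrightarrow> \<not> trail E C y y"
    and WD: "set_mset W \<subseteq> set_mset D"
    and m: "inM E (size W + 1) (\<alpha> + SB W)"
  shows "inM E (size D + 1) (\<alpha> + SB D)"
proof -
  obtain F where F: "set_mset F \<subseteq> E" "size F = size W + 1" "le (SB F) (\<alpha> + SB W)"
    using m unfolding inM_def by blast
  have cW: "\<forall>w\<in>#W. card w = 2" using WD DE E2 by auto
  obtain u v B where B: "B \<subseteq># W" "trail E B u v" "le (xv u + xv v) \<alpha>"
    using trail_exists[OF E2 F(1) cW F(2,3)] by blast
  have "Rred E B u v" using trail_reduce[OF B(2)] .
  then consider (a) B' where "B' \<subseteq># B" "distinct_ms B'" "trail E B' u v"
    | (b) y C where "C \<subseteq># B" "distinct_ms C" "trail E C y y"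
    unfolding Rred_def by blast
  then show ?thesis
  proof cases
    case a
    have "set_mset B' \<subseteq> set_mset D" using a(1) B(1) WD by (meson mset_subset_eqD subset_iff)
    then have BD: "B' \<subseteq># D" using distinct_sub a(2) by blast
    obtain F' where F': "set_mset F' \<subseteq> E" "size F' = size B' + 1" "SB F' = xv u + xv v + SB B'"
      using trail_mem[OF a(3)] by blast
    have "inM E (size B' + 1) (xv u + xv v + SB B')" using inM_SB[OF F'(1)] F' by simp
    moreover have "set_mset (D - B') \<subseteq> E" using DE by (meson in_diffD subset_iff)
    ultimately have "inM E (size B' + 1 + size (D - B')) (xv u + xv v + SB B' + SB (D - B'))"
      by (rule inM_add)
    moreover have "size B' + 1 + size (D - B') = size D + 1" using BD
      by (simp add: size_Diff_submset size_mset_mono)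
    moreover have "SB B' + SB (D - B') = SB D" using BD
      by (metis SB_union subset_mset.add_diff_inverse)
    ultimately have "inM E (size D + 1) (xv u + xv v + SB D)" by (simp add: add.assoc)
    then show ?thesis by (rule inM_mono) (rule le_add_mono[OF B(3) le_refl])
  next
    case b
    have "set_mset C \<subseteq> set_mset D" using b(1) B(1) WD by (meson mset_subset_eqD subset_iff)
    then have "C \<subseteq># D" using distinct_sub b(2) by blast
    then show ?thesis using NoSq b(3) by blast
  qed
qed

lemma choose2:
  fixes F :: "'v::finite set multiset"
  assumes "size F \<ge> 2"
  shows "\<exists>f1 f2 F'. F = add_mset f1 (add_mset f2 F') \<and>
    (\<forall>v\<in>{p, q}. Poly_Mapping.lookup (SB F) v \<ge> 1 \<longrightarrow> Poly_Mapping.lookup (SB F') v + 1 \<le> Poly_Mapping.lookup (SB F) v)"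
proof -
  have "F \<noteq> {#}" using assms by auto
  then obtain f0 where f0: "f0 \<in># F" by blast
  obtain f1 where f1: "f1 \<in># F" "(\<exists>f\<in>#F. p \<in> f) \<longrightarrow> p \<in> f1"
    using f0 by blast
  define F1 where "F1 = F - {#f1#}"
  have F: "F = add_mset f1 F1" using f1 F1_def by simp
  have "size F1 \<ge> 1" using assms F by simp
  then have "F1 \<noteq> {#}" by auto
  then obtain g0 where g0: "g0 \<in># F1" by blast
  obtain f2 where f2: "f2 \<in># F1" "(q \<notin> f1 \<and> (\<exists>g\<in>#F1. q \<in> g)) \<longrightarrow> q \<in> f2"
    using g0 by blast
  define F' where "F' = F1 - {#f2#}"
  have F1: "F1 = add_mset f2 F'" using f2 F'_def by simp
  have look: "\<And>v. Poly_Mapping.lookup (SB F) v = Poly_Mapping.lookup (ev f1) v + Poly_Mapping.lookup (ev f2) v + Poly_Mapping.lookup (SB F') v"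
    using F F1 by (simp add: lookup_add)
  have "\<forall>v\<in>{p, q}. Poly_Mapping.lookup (SB F) v \<ge> 1 \<longrightarrow> Poly_Mapping.lookup (SB F') v + 1 \<le> Poly_Mapping.lookup (SB F) v"
  proof (intro ballI impI)
    fix v assume v: "v \<in> {p, q}" and pos: "Poly_Mapping.lookup (SB F) v \<ge> 1"
    then obtain f where f: "f \<in># F" "v \<in> f" using lookup_SB_pos[of F v] by auto
    show "Poly_Mapping.lookup (SB F') v + 1 \<le> Poly_Mapping.lookup (SB F) v"
    proof (cases "v = p")
      case True
      then have "v \<in> f1" using f f1 by blast
      then show ?thesis using look[of v] by (simp add: lookup_ev)
    next
      case False
      then have vq: "v = q" using v by auto
      show ?thesis
      proof (cases "v \<in> f1")
        case True
        then show ?thesis using look[of v] by (simp add: lookup_ev)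
      next
        case False
        have "Poly_Mapping.lookup (SB F1) v \<ge> 1" using pos F False by (simp add: lookup_add lookup_ev)
        then obtain g where "g \<in># F1" "v \<in> g" using lookup_SB_pos[of F1 v] by auto
        then have "v \<in> f2" using f2 False vq by blast
        then show ?thesis using look[of v] by (simp add: lookup_ev)
      qed
    qed
  qed
  then show ?thesis using F F1 by blast
qed

definition Nset :: "'v set set \<Rightarrow> 'v set \<Rightarrow> ('v \<Rightarrow>\<^sub>0 nat) set" where
  "Nset E e1 = {g. inM E 2 (g + ev e1)}"

lemma L_sub_C:
  fixes D' :: "'v::finite set multiset"
  assumes E2: "\<forall>f\<in>E. card f = 2" and DE: "set_mset (add_mset e1 D') \<subseteq> E"
    and m: "inM E (size D' + 2) (\<beta> + SB (add_mset e1 D'))"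
  shows "\<exists>gs. length gs = size D' + 1 \<and> set gs \<subseteq> Nset E e1 \<and> le (sum_list gs) (\<beta> + SB D')"
proof -
  obtain F where F: "set_mset F \<subseteq> E" "size F = size D' + 2" "le (SB F) (\<beta> + SB (add_mset e1 D'))"
    using m unfolding inM_def by blast
  have "card e1 = 2" using E2 DE by auto
  then obtain p q where pq: "e1 = {p, q}" "p \<noteq> q" by (auto simp: card_2_iff)
  obtain f1 f2 F' where F': "F = add_mset f1 (add_mset f2 F')"
    "\<forall>v\<in>{p, q}. Poly_Mapping.lookup (SB F) v \<ge> 1 \<longrightarrow> Poly_Mapping.lookup (SB F') v + 1 \<le> Poly_Mapping.lookup (SB F) v"
    using choose2[of F p q] F(2) by auto
  define g0 where "g0 = (\<beta> + SB D') - SB F'"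
  have pw: "Poly_Mapping.lookup (SB F') v \<le> Poly_Mapping.lookup (\<beta> + SB D') v \<and>
      Poly_Mapping.lookup (ev f1 + ev f2) v \<le> Poly_Mapping.lookup (g0 + ev e1) v" for v
  proof -
    have A: "Poly_Mapping.lookup (SB F) v = Poly_Mapping.lookup (ev f1) v + Poly_Mapping.lookup (ev f2) v + Poly_Mapping.lookup (SB F') v"
      using F'(1) by (simp add: lookup_add)
    have B: "Poly_Mapping.lookup (SB F) v \<le> Poly_Mapping.lookup \<beta> v + Poly_Mapping.lookup (ev e1) v + Poly_Mapping.lookup (SB D') v"
      using F(3) unfolding le_def by (simp add: lookup_add add.assoc)
    have C: "Poly_Mapping.lookup (ev e1) v = (if v \<in> {p, q} then 1 else 0)" using pq by (simp add: lookup_ev)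
    have D: "v \<in> {p, q} \<Longrightarrow> Poly_Mapping.lookup (SB F) v \<ge> 1 \<Longrightarrow> Poly_Mapping.lookup (SB F') v + 1 \<le> Poly_Mapping.lookup (SB F) v"
      using F'(2) by blast
    show ?thesis unfolding g0_def lookup_add lookup_minus
      using A B C D by (cases "v \<in> {p, q}"; cases "Poly_Mapping.lookup (SB F) v \<ge> 1") (auto split: if_splits)
  qed
  obtain fs where fs: "mset fs = F'" using ex_mset by blast
  define gs where "gs = g0 # map ev fs"
  have "length gs = size D' + 1" using F(2) F'(1) fs gs_def by auto
  moreover have "set gs \<subseteq> Nset E e1"
  proof
    fix g assume "g \<in> set gs"
    then consider "g = g0" | f where "f \<in># F'" "g = ev f" using gs_def fs by auto
    then show "g \<in> Nset E e1"
    proof cases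
      case 1
      have "set_mset {#f1, f2#} \<subseteq> E" using F F'(1) by auto
      then have "inM E 2 (ev f1 + ev f2)" using inM_SB[of "{#f1, f2#}" E] by (simp add: numeral_2_eq_2)
      then have "inM E 2 (g0 + ev e1)" by (rule inM_mono) (use pw in \<open>auto simp: le_def\<close>)
      then show ?thesis using 1 unfolding Nset_def by simp
    next
      case 2
      have "set_mset {#f, e1#} \<subseteq> E" using F F'(1) 2(1) DE by auto
      then have "inM E 2 (ev f + ev e1)" using inM_SB[of "{#f, e1#}" E] by (simp add: numeral_2_eq_2)
      then show ?thesis using 2 unfolding Nset_def by simp
    qed
  qed
  moreover have "sum_list gs = \<beta> + SB D'"
  proof -
    have "sum_list gs = g0 + SB F'" unfolding gs_def fs[symmetric] SB_mset by simp
    also have "\<dots> = \<beta> + SB D'"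
      by (rule poly_mapping_eqI) (use pw in \<open>simp add: g0_def lookup_add lookup_minus\<close>)
    finally show ?thesis .
  qed
  ultimately show ?thesis by (intro exI[of _ gs]) simp
qed

lemma C_sub_L_aux:
  assumes "set gs \<subseteq> Nset E e1"
  shows "inM E (2 * length gs) (sum_list gs + SB (replicate_mset (length gs) e1))"
  using assms
proof (induction gs)
  case Nil then show ?case unfolding inM_def by (intro exI[of _ "{#}"]) simp
next
  case (Cons g gs)
  then have "inM E 2 (g + ev e1)" "inM E (2 * length gs) (sum_list gs + SB (replicate_mset (length gs) e1))"
    unfolding Nset_def by auto
  then have "inM E (2 + 2 * length gs) ((g + ev e1) + (sum_list gs + SB (replicate_mset (length gs) e1)))"
    by (rule inM_sum)
  then show ?case by (simp add: algebra_simps)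
qed

lemma sqfree_mon: "sqfree_monomial A = mon (ev A)"
  by (simp add: sqfree_monomial_def mon_def ev_def)

lemma sqfree_pow: "(sqfree_monomial A :: ('v, 'k::comm_ring_1) mpoly) ^ n = mon (SB (replicate_mset n A))"
  by (induction n) (simp_all add: sqfree_mon mon_mult, simp add: mon_def)

lemma prod_pow_mon:
  "finite I \<Longrightarrow> (\<Prod>i\<in>I. (sqfree_monomial (e i) :: ('v, 'k::comm_ring_1) mpoly) ^ a i) = mon (SB (\<Sum>i\<in>I. replicate_mset (a i) (e i)))"
proof (induction I rule: finite_induct)
  case empty then show ?case by (simp add: mon_def)
next
  case (insert i I)
  then show ?case by (simp add: sqfree_pow mon_mult)
qed

lemma prod_mon:
  "finite I \<Longrightarrow> (\<Prod>i\<in>I. (sqfree_monomial (e i) :: ('v, 'k::comm_ring_1) mpoly)) = mon (SB (\<Sum>i\<in>I. {#e i#}))"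
proof (induction I rule: finite_induct)
  case empty then show ?case by (simp add: mon_def)
next
  case (insert i I)
  then show ?case by (simp add: sqfree_mon mon_mult)
qed

lemma edge_ideal_mideal: "edge_ideal E = (mideal (ev ` E) :: ('v, 'k::comm_ring_1) mpoly set)"
proof -
  have "sqfree_monomial ` E = (mon ` (ev ` E) :: ('v, 'k) mpoly set)"
    by (auto simp: sqfree_mon image_image)
  then show ?thesis unfolding edge_ideal_def by (simp add: ideal_gen_mon)
qed

lemma colon_pow_edge:
  "ideal_colon (ideal_pow (edge_ideal E :: ('v, 'k::comm_ring_1) mpoly set) k) (mon c)
    = mideal {b. inM E k (b + c)}"
  unfolding edge_ideal_mideal ideal_pow_mideal colon_mideal sumsets_inM ..

theorem lemma3p3:
  fixes E :: "('v::finite) set set"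
    and s t :: nat
    and e :: "nat \<Rightarrow> 'v set"
    and a :: "nat \<Rightarrow> nat"
  assumes "simple_graph E"
    and "s \<ge> 1"
    and "\<forall>i\<in>{1..s}. e i \<in> E"
    and "inj_on e {1..s}"
    and "\<forall>i\<in>{1..s}. a i > 0"
    and "t = (\<Sum>i=1..s. a i) + 1"
    and "squarefree_monomial_ideal
           (ideal_colon (ideal_pow (edge_ideal E :: ('v, 'k::field) mpoly set) t)
              (\<Prod>i=1..s. edge_monomial (e i) ^ a i))"
  shows "ideal_colon (ideal_pow (edge_ideal E :: ('v, 'k) mpoly set) t)
            (\<Prod>i=1..s. edge_monomial (e i) ^ a i)
       = ideal_colon (ideal_pow (edge_ideal E) (s + 1)) (\<Prod>i=1..s. edge_monomial (e i))
     \<and> ideal_colon (ideal_pow (edge_ideal E) (s + 1)) (\<Prod>i=1..s. edge_monomial (e i))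
       = ideal_colon (ideal_pow (ideal_colon (ideal_pow (edge_ideal E) 2) (edge_monomial (e 1))) s)
            (\<Prod>i=2..s. edge_monomial (e i))"
proof -
  note sg = assms(1) and s1 = assms(2) and eE = assms(3) and apos = assms(5) and tdef = assms(6)
    and sq = assms(7)
  have E2: "\<forall>f\<in>E. card f = 2" using sg unfolding simple_graph_def .
  define W where "W = (\<Sum>i\<in>{1..s}. replicate_mset (a i) (e i))"
  define D where "D = (\<Sum>i\<in>{1..s}. {#e i#})"
  define D' where "D' = (\<Sum>i\<in>{2..s}. {#e i#})"
  have I1: "{1..s} = insert 1 {2..s}" using s1 by auto
  have DD': "D = add_mset (e 1) D'" unfolding D_def D'_def I1 by simp
  have sizeW: "size W = (\<Sum>i=1..s. a i)" unfolding W_def by simp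
  have sizeD: "size D = s" unfolding D_def by simp
  have sizeD': "size D' = s - 1" unfolding D'_def by simp
  have setW: "set_mset W = e ` {1..s}" unfolding W_def set_mset_sum[OF finite_atLeastAtMost]
    using apos by (auto split: if_splits)
  have setD: "set_mset D = e ` {1..s}" unfolding D_def set_mset_sum[OF finite_atLeastAtMost] by auto
  have DE: "set_mset D \<subseteq> E" using setD eE by auto
  have DW: "D \<subseteq># W" unfolding subseteq_mset_def D_def W_def count_sum
  proof
    fix x
    show "(\<Sum>i\<in>{1..s}. count {#e i#} x) \<le> (\<Sum>i\<in>{1..s}. count (replicate_mset (a i) (e i)) x)"
      by (rule sum_mono) (use apos in \<open>force simp: Suc_le_eq\<close>)
  qed
  have J: "ideal_colon (ideal_pow (edge_ideal E :: ('v, 'k) mpoly set) t) (\<Prod>i=1..s. edge_monomial (e i) ^ a i)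
      = mideal {b. inM E t (b + SB W)}"
    unfolding W_def prod_pow_mon[OF finite_atLeastAtMost] colon_pow_edge ..
  have L: "ideal_colon (ideal_pow (edge_ideal E :: ('v, 'k) mpoly set) (s + 1)) (\<Prod>i=1..s. edge_monomial (e i))
      = mideal {b. inM E (s + 1) (b + SB D)}"
    unfolding D_def prod_mon[OF finite_atLeastAtMost] colon_pow_edge ..
  have C: "ideal_colon (ideal_pow (ideal_colon (ideal_pow (edge_ideal E :: ('v, 'k) mpoly set) 2) (edge_monomial (e 1))) s)
            (\<Prod>i=2..s. edge_monomial (e i))
      = mideal {b. \<exists>g\<in>sumsets (Nset E (e 1)) s. le g (b + SB D')}"
  proof -
    have C1: "(\<Prod>i=2..s. edge_monomial (e i)) = (mon (SB D') :: ('v, 'k) mpoly)"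
      unfolding D'_def by (rule prod_mon) simp
    have C2: "edge_monomial (e 1) = (mon (ev (e 1)) :: ('v, 'k) mpoly)" by (rule sqfree_mon)
    show ?thesis
      unfolding C1 C2 colon_pow_edge ideal_pow_mideal colon_mideal Nset_def by simp
  qed
  define X where "X = {b. inM E t (b + SB W)}"
  define Y where "Y = {b. inM E (s + 1) (b + SB D)}"
  define Z where "Z = {b. \<exists>g\<in>sumsets (Nset E (e 1)) s. le g (b + SB D')}"
  have tW: "t = size W + 1" using tdef sizeW by simp
  have WE: "set_mset W \<subseteq> E" using setW setD DE by simp
  have cW: "\<forall>w\<in>#W. card w = 2" using WE E2 by auto
  obtain S0 where S0: "S0 \<subseteq> range sqfree_monomial"
    "ideal_colon (ideal_pow (edge_ideal E :: ('v, 'k) mpoly set) t) (\<Prod>i=1..s. edge_monomial (e i) ^ a i) = ideal_gen S0"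
    using sq unfolding squarefree_monomial_ideal_def by blast
  define AA where "AA = {A. sqfree_monomial A \<in> S0}"
  have "S0 = mon ` (ev ` AA)"
  proof
    show "S0 \<subseteq> mon ` ev ` AA"
    proof
      fix g assume g: "g \<in> S0"
      then obtain A where A: "g = sqfree_monomial A" using S0(1) by auto
      then have "A \<in> AA" using g AA_def by simp
      then show "g \<in> mon ` ev ` AA" using A sqfree_mon by blast
    qed
    show "mon ` ev ` AA \<subseteq> S0" unfolding AA_def by (auto simp: sqfree_mon)
  qed
  then have JJ: "(mideal X :: ('v, 'k) mpoly set) = mideal (ev ` AA)"
    using S0(2) J ideal_gen_mon unfolding X_def by metis
  have rad: "\<exists>A b'. le (ev A) b \<and> b' \<in> X \<and> le b' (ev A)" if b: "b \<in> X" for b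
  proof -
    have "(mon b :: ('v, 'k) mpoly) \<in> mideal X" using b mon_mem_mideal by blast
    then have "(mon b :: ('v, 'k) mpoly) \<in> mideal (ev ` AA)" using JJ by simp
    then obtain A where A: "A \<in> AA" "le (ev A) b" using mon_mem_mideal by blast
    have "(mon (ev A) :: ('v, 'k) mpoly) \<in> mideal (ev ` AA)" using A(1) mon_mem_mideal by blast
    then have "(mon (ev A) :: ('v, 'k) mpoly) \<in> mideal X" using JJ by simp
    then obtain b' where "b' \<in> X" "le b' (ev A)" using mon_mem_mideal by blast
    then show ?thesis using A(2) by blast
  qed
  have NoSq: "\<not> trail E C y y" if CD: "C \<subseteq># D" for C y
  proof
    assume tr: "trail E C y y"
    obtain F where F: "set_mset F \<subseteq> E" "size F = size C + 1" "SB F = xv y + xv y + SB C"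
      using trail_mem[OF tr] by blast
    have "inM E (size C + 1) (xv y + xv y + SB C)" using inM_SB[OF F(1)] F by simp
    moreover have "set_mset (W - C) \<subseteq> E" using WE by (meson in_diffD subset_iff)
    ultimately have m: "inM E (size C + 1 + size (W - C)) (xv y + xv y + SB C + SB (W - C))"
      by (rule inM_add)
    have CW: "C \<subseteq># W" using CD DW by (rule subset_mset.order_trans)
    have "size C + 1 + size (W - C) = t" using CW tW by (simp add: size_Diff_submset size_mset_mono)
    moreover have "SB C + SB (W - C) = SB W" using CW by (metis SB_union subset_mset.add_diff_inverse)
    ultimately have "inM E t ((xv y + xv y) + SB W)" using m by (simp add: add.assoc)
    then have "xv y + xv y \<in> X" unfolding X_def by simp
    then obtain A b' where A: "le (ev A) (xv y + xv y)" "b' \<in> X" "le b' (ev A)" using rad by blast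
    have "le (ev A) (xv y)"
      unfolding le_def
    proof
      fix v
      have "Poly_Mapping.lookup (ev A) v \<le> Poly_Mapping.lookup (xv y + xv y) v" using A(1) unfolding le_def by blast
      then show "Poly_Mapping.lookup (ev A) v \<le> Poly_Mapping.lookup (xv y) v"
        by (auto simp: lookup_ev lookup_add lookup_single when_def split: if_splits)
    qed
    then have "le b' (xv y)" using A(3) le_trans by blast
    then have "inM E t (xv y + SB W)" using A(2) unfolding X_def
      by (auto elim!: inM_mono intro: le_add_mono)
    then have "2 * t \<le> deg (xv y + SB W)" by (rule inM_deg[OF E2])
    also have "\<dots> = 1 + 2 * size W" using deg_SB[OF cW] deg_xv[of y] deg_add[of "xv y" "SB W"] by linarith
    finally show False using tW by simp
  qed
  have XY: "X = Y"
  proof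
    show "X \<subseteq> Y"
    proof
      fix b assume "b \<in> X"
      then have "inM E (size W + 1) (b + SB W)" using tW unfolding X_def by simp
      moreover have "set_mset W \<subseteq> set_mset D" using setW setD by simp
      ultimately have "inM E (size D + 1) (b + SB D)"
        using main_comb[OF E2 DE NoSq] by blast
      then show "b \<in> Y" using sizeD unfolding Y_def by simp
    qed
    show "Y \<subseteq> X"
    proof
      fix b assume "b \<in> Y"
      then have "inM E (s + 1) (b + SB D)" unfolding Y_def by simp
      moreover have "set_mset (W - D) \<subseteq> E" using WE by (meson in_diffD subset_iff)
      ultimately have m: "inM E (s + 1 + size (W - D)) (b + SB D + SB (W - D))"
        by (rule inM_add)
      have "size D \<le> size W" using DW by (rule size_mset_mono)
      then have "s + 1 + size (W - D) = t" using DW tW sizeD by (simp add: size_Diff_submset)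
      moreover have "SB D + SB (W - D) = SB W" using DW by (metis SB_union subset_mset.add_diff_inverse)
      ultimately show "b \<in> X" using m unfolding X_def by (simp add: add.assoc)
    qed
  qed
  have YZ: "Y = Z"
  proof
    show "Y \<subseteq> Z"
    proof
      fix b assume "b \<in> Y"
      then have "inM E (size D' + 2) (b + SB (add_mset (e 1) D'))"
        using DD' sizeD' s1 unfolding Y_def by simp
      then obtain gs where gs: "length gs = size D' + 1" "set gs \<subseteq> Nset E (e 1)" "le (sum_list gs) (b + SB D')"
        using L_sub_C[OF E2] DE DD' by metis
      have "sum_list gs \<in> sumsets (Nset E (e 1)) s"
        unfolding sumsets_def using gs sizeD' s1 by auto
      then show "b \<in> Z" unfolding Z_def using gs(3) by blast
    qed
    show "Z \<subseteq> Y"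
    proof
      fix b assume "b \<in> Z"
      then obtain gs where gs: "length gs = s" "set gs \<subseteq> Nset E (e 1)" "le (sum_list gs) (b + SB D')"
        unfolding Z_def sumsets_def by blast
      have "inM E (2 * s) (sum_list gs + SB (replicate_mset s (e 1)))"
        using C_sub_L_aux[OF gs(2)] gs(1) by simp
      then have "inM E (2 * s) (b + SB D' + SB (replicate_mset s (e 1)))"
        by (rule inM_mono) (rule le_add_mono[OF gs(3) le_refl])
      then have m: "inM E (size (D' + replicate_mset s (e 1)) + 1) (b + SB (D' + replicate_mset s (e 1)))"
        using sizeD' s1 by (simp add: add.assoc mult_2)
      have "set_mset (D' + replicate_mset s (e 1)) \<subseteq> set_mset D" using DD' by auto
      then have "inM E (size D + 1) (b + SB D)"
        using main_comb[OF E2 DE NoSq _ m] by blast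
      then show "b \<in> Y" using sizeD unfolding Y_def by simp
    qed
  qed
  have G1: "ideal_colon (ideal_pow (edge_ideal E :: ('v, 'k) mpoly set) t) (\<Prod>i=1..s. edge_monomial (e i) ^ a i)
       = ideal_colon (ideal_pow (edge_ideal E) (s + 1)) (\<Prod>i=1..s. edge_monomial (e i))"
    unfolding J L using XY unfolding X_def Y_def by simp
  have G2: "ideal_colon (ideal_pow (edge_ideal E :: ('v, 'c::comm_ring_1) mpoly set) (s + 1)) (\<Prod>i=1..s. edge_monomial (e i))
       = ideal_colon (ideal_pow (ideal_colon (ideal_pow (edge_ideal E) 2) (edge_monomial (e 1))) s)
            (\<Prod>i=2..s. edge_monomial (e i))"
  proof -
    have L2: "ideal_colon (ideal_pow (edge_ideal E :: ('v, 'c) mpoly set) (s + 1)) (\<Prod>i=1..s. edge_monomial (e i))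
      = mideal {b. inM E (s + 1) (b + SB D)}"
      unfolding D_def prod_mon[OF finite_atLeastAtMost] colon_pow_edge ..
    have C1: "(\<Prod>i=2..s. edge_monomial (e i)) = (mon (SB D') :: ('v, 'c) mpoly)"
      unfolding D'_def by (rule prod_mon) simp
    have C2: "edge_monomial (e 1) = (mon (ev (e 1)) :: ('v, 'c) mpoly)" by (rule sqfree_mon)
    have C3: "ideal_colon (ideal_pow (ideal_colon (ideal_pow (edge_ideal E :: ('v, 'c) mpoly set) 2) (edge_monomial (e 1))) s)
            (\<Prod>i=2..s. edge_monomial (e i))
      = mideal {b. \<exists>g\<in>sumsets (Nset E (e 1)) s. le g (b + SB D')}"
      unfolding C1 C2 colon_pow_edge ideal_pow_mideal colon_mideal Nset_def by simp
    show ?thesis unfolding L2 C3 using YZ unfolding Y_def Z_def by simp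
  qed
  show ?thesis using G1 G2 by blast
qed

end
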